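(* With the setting below, the operator $\bar\pi:\Omega^1\to\mathfrak{X}_{\mathcal{A}}(\Lambda_0)$ defined by $\bar\pi(\alpha_{\mathbf{p}})(\gamma)=\Phi_\gamma^{-1}\pi_1(\alpha_{\mathbf{p}_\gamma})$, which explicitly is $$\bar\pi(\alpha_{\mathbf{p}})(\gamma)=D_s^{-1}(\mathbf{k}_\gamma\mathbf{p}_\gamma')\mathbf{T}_\gamma+\mathbf{p}_\gamma'\mathbf{N}_\gamma,$$ is a Hamiltonian operator: it is skew-symmetric, i.e. $\alpha_{\mathbf{q}}(\bar\pi\alpha_{\mathbf{p}})=-\alpha_{\mathbf{p}}(\bar\pi\alpha_{\mathbf{q}})$; its image $\bar\pi\Omega^1$ is a Lie subalgebra of $\mathfrak{X}_{\mathcal{A}}(\Lambda_0)$; and the $2$-form $\omega(\bar\pi\alpha,\bar\pi\beta)=\beta(\bar\pi\alpha)$ is closed, i.e. $d\omega=0$, where $d\omega(\xi_1,\xi_2,\xi_3)=\sum_{\mathrm{cyclic}}\big(\xi_1\,\omega(\xi_2,\xi_3)-\omega([\xi_1,\xi_2],\xi_3)\big)$ for $\xi_i\in\bar\pi\Omega^1$.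
   Context: $\Lambda_0$ is the space of arc-length parametrized plane curves; for $\gamma\in\Lambda_0$, $\{\mathbf{T}_\gamma,\mathbf{N}_\gamma\}$ is its Frenet frame and $\mathbf{k}_\gamma$ its curvature ($\mathbf{T}'=\mathbf{k}\mathbf{N}$, $\mathbf{N}'=-\mathbf{k}\mathbf{T}$; $'=D_s$ is the arc-length derivative, $D_s^{-1}$ a formal antiderivative). $\mathcal{P}=\mathbb{R}[k^{(m)}:m\in\mathbb{N}]$; $\mathcal{A}$ is the algebra of scalar fields $\mathbf{f}$ on $\Lambda_0$ with $\mathbf{f}_\gamma\in\mathcal{P}$ evaluated at $\mathbf{k}_\gamma$. $\mathfrak{X}_{\mathcal{A}}(\Lambda_0)=\{\mathbf{V}=\mathbf{f}\mathbf{T}+\mathbf{g}\mathbf{N}:\mathbf{f},\mathbf{g}\in\mathcal{A},\ \mathbf{f}_\gamma=D_s^{-1}(\mathbf{k}_\gamma\mathbf{g}_\gamma)\}$, a Lie algebra under $[\mathbf{V},\mathbf{W}](\gamma)=D_{\mathbf{V}_\gamma}\mathbf{W}_\gamma-D_{\mathbf{W}_\gamma}\mathbf{V}_\gamma$, where for $V=fT+gN$, $W=f_WT+g_WN$: $\varphi_V=g'+kf$, $\rho_V=f'-kg$, $V$ acts on $\mathcal{P}$ as the derivation with $V(k)=\varphi_V'-k\rho_V$, $V(h')=V(h)'+\rho_Vh'$, and $D_VW=(V(f_W)-g_W\varphi_V)T+(V(g_W)+f_W\varphi_V)N$. For $\mathbf{V}\in\mathfrak{X}_{\mathcal{A}}(\Lambda_0)$,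 $\mathbf{V}_\gamma(\mathbf{k}_\gamma)=\varphi_{\mathbf{V}_\gamma}'$. For $a\in\mathcal{P}$, $\partial_a=\sum_m a^{(m)}\partial/\partial k^{(m)}$; $\Phi_\gamma(\mathbf{V}_\gamma)=\partial_{\mathbf{V}_\gamma(\mathbf{k}_\gamma)}$, which is injective on $\mathfrak{X}_{\mathcal{A}}(\Lambda_0)$, and $\Phi_\gamma^{-1}$ denotes its inverse on the image. $\Omega^0=\{S=\int L\,ds: L=L(\mathbf{k},\mathbf{k}',\dots)\in\mathcal{A}\}$ (functionals modulo total derivatives), with $(\mathbf{V}S)(\gamma)=\int\mathbf{V}_\gamma(\mathbf{k}_\gamma)\frac{\delta L}{\delta\mathbf{k}_\gamma}ds$, $\frac{\delta L}{\delta k}=\sum_m(-D_s)^m\frac{\partial L}{\partial k^{(m)}}$. For $\mathbf{p}\in\mathcal{A}$, $\alpha_{\mathbf{p}}(\mathbf{V})=\int\mathbf{V}(\mathbf{k})\mathbf{p}\,ds\in\Omega^0$, and $\Omega^1=\{\alpha_{\mathbf{p}}:\mathbf{p}\in\mathcal{A},\ \exists\mathbf{p}_1\in\mathcal{A}\text{ with }\mathbf{p}_1'=\mathbf{k}\mathbf{p}'\}$. $\pi_1$ is the mKdV Hamiltonian operator $\pi_1(\alpha_p)=\partial_{\mathcal{D}(p)}$ with $\mathcal{D}=D_s^3+k'D_s^{-1}kD_s+k^2D_s$. *)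

theory Defs
  imports Main "HOL-Library.Poly_Mapping" Complex_Main
begin

text \<open>Differential polynomials P = R[k^(m) : m in N].  A monomial is a finitely
supported exponent map from nat to nat, a polynomial is
a finitely supported coefficient map on monomials.\<close>

type_synonym dpoly = "(nat \<Rightarrow>\<^sub>0 nat) \<Rightarrow>\<^sub>0 real"

text \<open>the variable k^(m); the curvature itself is kv 0\<close>
definition kv :: "nat \<Rightarrow> dpoly" where
  "kv m = Poly_Mapping.single (Poly_Mapping.single m 1) 1"

definition dconst :: "real \<Rightarrow> dpoly" where
  "dconst c = Poly_Mapping.single 0 c"

definition vars :: "dpoly \<Rightarrow> nat set" where
  "vars p = (\<Union>\<mu>\<in>Poly_Mapping.keys p. Poly_Mapping.keys \<mu>)"

definition pdiff :: "nat \<Rightarrow> dpoly \<Rightarrow> dpoly" where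
  "pdiff m p = (\<Sum>\<mu>\<in>Poly_Mapping.keys p. Poly_Mapping.single (\<mu> - Poly_Mapping.single m 1)
                                (Poly_Mapping.lookup p \<mu> * real (Poly_Mapping.lookup \<mu> m)))"

definition Ds :: "dpoly \<Rightarrow> dpoly" where
  "Ds p = (\<Sum>m\<in>vars p. kv (Suc m) * pdiff m p)"

definition evd :: "dpoly \<Rightarrow> dpoly \<Rightarrow> dpoly" where
  "evd a h = (\<Sum>m\<in>vars h. (Ds ^^ m) a * pdiff m h)"

definition vard :: "dpoly \<Rightarrow> dpoly" where
  "vard L = (\<Sum>m\<in>vars L. (- 1) ^ m * (Ds ^^ m) (pdiff m L))"

text \<open>Omega^0: functionals \<open>\<integral>L ds\<close> modulo total derivatives.  Two densities
represent the same functional iff their difference is a total derivative.\<close>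
definition ieq :: "dpoly \<Rightarrow> dpoly \<Rightarrow> bool" where
  "ieq L1 L2 \<longleftrightarrow> (\<exists>h. L1 - L2 = Ds h)"

text \<open>Vector fields V = f T + g N along curves, with f, g in P, given as pairs (f,g).\<close>
type_synonym vfield = "dpoly \<times> dpoly"

definition phiV :: "vfield \<Rightarrow> dpoly" where
  "phiV V = Ds (snd V) + kv 0 * fst V"

definition rhoV :: "vfield \<Rightarrow> dpoly" where
  "rhoV V = Ds (fst V) - kv 0 * snd V"

text \<open>V(k^(m)): V(k) = phi' - k rho,  V(h') = V(h)' + rho h'\<close>
fun vk :: "vfield \<Rightarrow> nat \<Rightarrow> dpoly" where
  "vk V 0 = Ds (phiV V) - kv 0 * rhoV V"
| "vk V (Suc m) = Ds (vk V m) + rhoV V * kv (Suc m)"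

definition vact :: "vfield \<Rightarrow> dpoly \<Rightarrow> dpoly" where
  "vact V h = (\<Sum>m\<in>vars h. vk V m * pdiff m h)"

definition XA :: "vfield set" where
  "XA = {(f, g). Ds f = kv 0 * g}"

definition covD :: "vfield \<Rightarrow> vfield \<Rightarrow> vfield" where
  "covD V W = (vact V (fst W) - snd W * phiV V, vact V (snd W) + fst W * phiV V)"

definition vbracket :: "vfield \<Rightarrow> vfield \<Rightarrow> vfield" where
  "vbracket V W = (fst (covD V W) - fst (covD W V), snd (covD V W) - snd (covD W V))"

definition vadd :: "vfield \<Rightarrow> vfield \<Rightarrow> vfield" where
  "vadd V W = (fst V + fst W, snd V + snd W)"

definition vscale :: "real \<Rightarrow> vfield \<Rightarrow> vfield" where
  "vscale c V = (dconst c * fst V, dconst c * snd V)"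

definition Omega1 :: "dpoly set" where
  "Omega1 = {p. \<exists>p1. Ds p1 = kv 0 * Ds p}"

text \<open>alpha_p(V) = \<integral> V(k) p ds  (a density representing an element of Omega^0)\<close>
definition alpha :: "dpoly \<Rightarrow> vfield \<Rightarrow> dpoly" where
  "alpha p V = vk V 0 * p"

text \<open>bar pi(alpha_p) = D_s^{-1}(k p') T + p' N, where p1 is the chosen
antiderivative D_s^{-1}(k p') (required: Ds p1 = k * Ds p)\<close>
definition pibar :: "dpoly \<Rightarrow> dpoly \<Rightarrow> vfield" where
  "pibar p p1 = (p1, Ds p)"

definition pibar_image :: "vfield set" where
  "pibar_image = {pibar p p1 | p p1. p \<in> Omega1 \<and> Ds p1 = kv 0 * Ds p}"

text \<open>V applied to the functional \<integral>L: \<integral> V(k) \<delta>L/\<delta>k ds\<close>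
definition vfun :: "vfield \<Rightarrow> dpoly \<Rightarrow> dpoly" where
  "vfun V L = vk V 0 * vard L"

text \<open>omega(xi, bar pi alpha_q) = alpha_q(xi)\<close>
definition omega :: "vfield \<Rightarrow> dpoly \<Rightarrow> dpoly" where
  "omega xi q = alpha q xi"

end

theory Submission imports Defs begin

lemma poly_expand: "p = (\<Sum>\<mu>\<in>Poly_Mapping.keys p. Poly_Mapping.single \<mu> (Poly_Mapping.lookup p \<mu>))"
  for p :: dpoly
proof (rule poly_mapping_eqI)
  fix k
  show "Poly_Mapping.lookup p k = Poly_Mapping.lookup (\<Sum>\<mu>\<in>Poly_Mapping.keys p. Poly_Mapping.single \<mu> (Poly_Mapping.lookup p \<mu>)) k"
    unfolding lookup_sum lookup_single
    by (cases "k \<in> Poly_Mapping.keys p") (auto simp: when_def in_keys_iff)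
qed

lemma pdiff_add: "pdiff m (p + q) = pdiff m p + pdiff m q"
  unfolding pdiff_def
  by (rule setsum_keys_plus_distrib) (simp_all add: single_add distrib_right)

lemma pdiff_zero[simp]: "pdiff m 0 = 0"
  by (simp add: pdiff_def)

lemma pdiff_minus: "pdiff m (- p) = - pdiff m p"
proof -
  have "pdiff m (- p) + pdiff m p = 0" by (simp flip: pdiff_add)
  thus ?thesis by (simp add: eq_neg_iff_add_eq_0)
qed

lemma pdiff_diff: "pdiff m (p - q) = pdiff m p - pdiff m q"
  using pdiff_add[of m p "- q"] pdiff_minus[of m q] by simp

lemma pdiff_sum: "pdiff m (sum f A) = (\<Sum>x\<in>A. pdiff m (f x))"
  by (induction A rule: infinite_finite_induct) (auto simp: pdiff_add)

lemma pdiff_single: "pdiff m (Poly_Mapping.single \<mu> c) =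
   Poly_Mapping.single (\<mu> - Poly_Mapping.single m 1) (c * real (Poly_Mapping.lookup \<mu> m))"
  by (cases "c = 0") (simp_all add: pdiff_def)

lemma single_mult_aux:
  fixes \<mu> \<nu> :: "nat \<Rightarrow>\<^sub>0 nat"
  assumes "Poly_Mapping.lookup \<mu> m \<noteq> 0"
  shows "\<mu> - Poly_Mapping.single m 1 + \<nu> = \<mu> + \<nu> - Poly_Mapping.single m 1"
  using assms by (intro poly_mapping_eqI) (auto simp: lookup_minus lookup_add lookup_single when_def)

lemma pdiff_mono_mult:
  "pdiff m (Poly_Mapping.single \<mu> c * Poly_Mapping.single \<nu> d) =
   pdiff m (Poly_Mapping.single \<mu> c) * Poly_Mapping.single \<nu> d + Poly_Mapping.single \<mu> c * pdiff m (Poly_Mapping.single \<nu> d)"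
proof -
  have A: "Poly_Mapping.single (\<mu> - Poly_Mapping.single m 1 + \<nu>) (c * real (Poly_Mapping.lookup \<mu> m) * d)
      = Poly_Mapping.single (\<mu> + \<nu> - Poly_Mapping.single m 1) (c * d * real (Poly_Mapping.lookup \<mu> m))"
    using single_mult_aux[of \<mu> m \<nu>] by (cases "Poly_Mapping.lookup \<mu> m = 0") (simp_all add: mult_ac)
  have B: "Poly_Mapping.single (\<mu> + (\<nu> - Poly_Mapping.single m 1)) (c * (d * real (Poly_Mapping.lookup \<nu> m)))
      = Poly_Mapping.single (\<mu> + \<nu> - Poly_Mapping.single m 1) (c * d * real (Poly_Mapping.lookup \<nu> m))"
    using single_mult_aux[of \<nu> m \<mu>] by (cases "Poly_Mapping.lookup \<nu> m = 0") (simp_all add: add.commute mult_ac)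
  have "pdiff m (Poly_Mapping.single \<mu> c) * Poly_Mapping.single \<nu> d + Poly_Mapping.single \<mu> c * pdiff m (Poly_Mapping.single \<nu> d)
     = Poly_Mapping.single (\<mu> - Poly_Mapping.single m 1 + \<nu>) (c * real (Poly_Mapping.lookup \<mu> m) * d)
      + Poly_Mapping.single (\<mu> + (\<nu> - Poly_Mapping.single m 1)) (c * (d * real (Poly_Mapping.lookup \<nu> m)))"
    unfolding pdiff_single mult_single ..
  also have "\<dots> = Poly_Mapping.single (\<mu> + \<nu> - Poly_Mapping.single m 1) (c * d * real (Poly_Mapping.lookup \<mu> m) + c * d * real (Poly_Mapping.lookup \<nu> m))"
    unfolding A B single_add ..
  also have "\<dots> = pdiff m (Poly_Mapping.single \<mu> c * Poly_Mapping.single \<nu> d)"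
    unfolding pdiff_single mult_single by (simp add: lookup_add algebra_simps)
  finally show ?thesis ..
qed

lemma pdiff_mult: "pdiff m (p * q) = pdiff m p * q + p * pdiff m q"
proof -
  let ?s = "\<lambda>\<mu>. Poly_Mapping.single \<mu> (Poly_Mapping.lookup p \<mu>)"
  let ?t = "\<lambda>\<nu>. Poly_Mapping.single \<nu> (Poly_Mapping.lookup q \<nu>)"
  have "p * q = (\<Sum>\<mu>\<in>Poly_Mapping.keys p. \<Sum>\<nu>\<in>Poly_Mapping.keys q. ?s \<mu> * ?t \<nu>)"
    by (subst poly_expand[of p], subst poly_expand[of q]) (simp add: sum_product)
  hence "pdiff m (p * q) = (\<Sum>\<mu>\<in>Poly_Mapping.keys p. \<Sum>\<nu>\<in>Poly_Mapping.keys q. pdiff m (?s \<mu>) * ?t \<nu> + ?s \<mu> * pdiff m (?t \<nu>))"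
    by (simp add: pdiff_sum pdiff_mono_mult)
  also have "\<dots> = (\<Sum>\<mu>\<in>Poly_Mapping.keys p. pdiff m (?s \<mu>)) * (\<Sum>\<nu>\<in>Poly_Mapping.keys q. ?t \<nu>)
     + (\<Sum>\<mu>\<in>Poly_Mapping.keys p. ?s \<mu>) * (\<Sum>\<nu>\<in>Poly_Mapping.keys q. pdiff m (?t \<nu>))"
    by (simp add: sum.distrib sum_product)
  also have "\<dots> = pdiff m p * q + p * pdiff m q"
    by (simp flip: pdiff_sum poly_expand)
  finally show ?thesis .
qed


lemma finite_vars[simp]: "finite (vars p)"
  by (simp add: vars_def)

lemma pdiff_notvar: "m \<notin> vars p \<Longrightarrow> pdiff m p = 0"
  unfolding pdiff_def vars_def
  by (intro sum.neutral) (auto simp: in_keys_iff)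

lemma keys_add_nat: "Poly_Mapping.keys (a + b) \<subseteq> Poly_Mapping.keys a \<union> Poly_Mapping.keys b"
  for a b :: "nat \<Rightarrow>\<^sub>0 nat"
  by (rule keys_add)

lemma vars_add: "vars (p + q) \<subseteq> vars p \<union> vars q"
  unfolding vars_def using keys_add[of p q] by blast

lemma vars_mult: "vars (p * q) \<subseteq> vars p \<union> vars q"
proof
  fix m assume "m \<in> vars (p * q)"
  then obtain \<mu> where "\<mu> \<in> Poly_Mapping.keys (p * q)" "m \<in> Poly_Mapping.keys \<mu>" by (auto simp: vars_def)
  then obtain a b where "\<mu> = a + b" "a \<in> Poly_Mapping.keys p" "b \<in> Poly_Mapping.keys q"
    using keys_mult[of p q] by blast
  with \<open>m \<in> Poly_Mapping.keys \<mu>\<close> keys_add[of a b] show "m \<in> vars p \<union> vars q"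
    by (auto simp: vars_def)
qed

lemma vars_kv: "vars (kv n) = {n}"
  by (simp add: vars_def kv_def)

lemma vars_dconst: "vars (dconst c) = {}"
  by (simp add: vars_def dconst_def)

lemma pdiff_kv: "pdiff m (kv n) = (if m = n then 1 else 0)"
  by (auto simp: kv_def pdiff_single lookup_single when_def)

lemma pdiff_dconst: "pdiff m (dconst c) = 0"
  by (simp add: pdiff_notvar vars_dconst)

lemma Ds_super: "finite S \<Longrightarrow> vars p \<subseteq> S \<Longrightarrow> Ds p = (\<Sum>m\<in>S. kv (Suc m) * pdiff m p)"
  unfolding Ds_def by (rule sum.mono_neutral_left) (auto simp: pdiff_notvar)

lemma evd_super: "finite S \<Longrightarrow> vars p \<subseteq> S \<Longrightarrow> evd a p = (\<Sum>m\<in>S. (Ds ^^ m) a * pdiff m p)"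
  unfolding evd_def by (rule sum.mono_neutral_left) (auto simp: pdiff_notvar)

definition gder :: "(nat \<Rightarrow> dpoly) \<Rightarrow> dpoly \<Rightarrow> dpoly" where
  "gder c p = (\<Sum>m\<in>vars p. c m * pdiff m p)"

lemma gder_super: "finite S \<Longrightarrow> vars p \<subseteq> S \<Longrightarrow> gder c p = (\<Sum>m\<in>S. c m * pdiff m p)"
  unfolding gder_def by (rule sum.mono_neutral_left) (auto simp: pdiff_notvar)

lemma gder_add: "gder c (p + q) = gder c p + gder c q"
proof -
  have "gder c (p + q) = (\<Sum>m\<in>vars p \<union> vars q. c m * pdiff m (p + q))"
    using vars_add[of p q] by (intro gder_super) auto
  also have "\<dots> = (\<Sum>m\<in>vars p \<union> vars q. c m * pdiff m p) + (\<Sum>m\<in>vars p \<union> vars q. c m * pdiff m q)"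
    by (simp add: pdiff_add distrib_left sum.distrib)
  also have "\<dots> = gder c p + gder c q"
    by (simp add: gder_super[of "vars p \<union> vars q"])
  finally show ?thesis .
qed

lemma gder_mult: "gder c (p * q) = gder c p * q + p * gder c q"
proof -
  have "gder c (p * q) = (\<Sum>m\<in>vars p \<union> vars q. c m * pdiff m (p * q))"
    using vars_mult[of p q] by (intro gder_super) auto
  also have "\<dots> = (\<Sum>m\<in>vars p \<union> vars q. c m * pdiff m p) * q + p * (\<Sum>m\<in>vars p \<union> vars q. c m * pdiff m q)"
    by (simp add: pdiff_mult distrib_left sum.distrib sum_distrib_left sum_distrib_right mult_ac)
  also have "\<dots> = gder c p * q + p * gder c q"
    by (simp add: gder_super[of "vars p \<union> vars q"])
  finally show ?thesis .
qed

lemma gder_kv: "gder c (kv n) = c n"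
  by (simp add: gder_def vars_kv pdiff_kv)

lemma gder_dconst: "gder c (dconst a) = 0"
  by (simp add: gder_def vars_dconst)

lemma Ds_gder: "Ds = gder (\<lambda>m. kv (Suc m))"
  by (simp add: fun_eq_iff Ds_def gder_def)

lemma evd_gder: "evd a = gder (\<lambda>m. (Ds ^^ m) a)"
  by (simp add: fun_eq_iff evd_def gder_def)

lemma Ds_add: "Ds (p + q) = Ds p + Ds q" by (simp add: Ds_gder gder_add)
lemma Ds_mult: "Ds (p * q) = Ds p * q + p * Ds q" by (simp add: Ds_gder gder_mult)
lemma Ds_kv[simp]: "Ds (kv n) = kv (Suc n)" by (simp add: Ds_gder gder_kv)
lemma Ds_dconst[simp]: "Ds (dconst c) = 0" by (simp add: Ds_gder gder_dconst)
lemma Ds_zero[simp]: "Ds 0 = 0" by (simp add: Ds_def vars_def)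
lemma Ds_minus: "Ds (- p) = - Ds p"
proof -
  have "Ds (- p) + Ds p = 0" by (simp flip: Ds_add)
  thus ?thesis by (simp add: eq_neg_iff_add_eq_0)
qed
lemma Ds_diff: "Ds (p - q) = Ds p - Ds q"
  using Ds_add[of p "- q"] Ds_minus[of q] by simp
lemma Ds_one[simp]: "Ds 1 = 0"
  using Ds_dconst[of 1] by (simp add: dconst_def)
lemma Ds_funpow_zero[simp]: "(Ds ^^ n) 0 = 0"
  by (induction n) auto
lemma Ds_sum: "Ds (sum f A) = (\<Sum>x\<in>A. Ds (f x))"
  by (induction A rule: infinite_finite_induct) (auto simp: Ds_add)
lemma Ds_funpow_add: "(Ds ^^ n) (p + q) = (Ds ^^ n) p + (Ds ^^ n) q"
  by (induction n) (auto simp: Ds_add)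

lemma evd_add: "evd a (p + q) = evd a p + evd a q" by (simp add: evd_gder gder_add)
lemma evd_mult: "evd a (p * q) = evd a p * q + p * evd a q" by (simp add: evd_gder gder_mult)
lemma evd_kv[simp]: "evd a (kv n) = (Ds ^^ n) a" by (simp add: evd_gder gder_kv)
lemma evd_dconst[simp]: "evd a (dconst c) = 0" by (simp add: evd_gder gder_dconst)
lemma evd_zero[simp]: "evd a 0 = 0" by (simp add: evd_def vars_def)
lemma evd_minus: "evd a (- p) = - evd a p"
proof -
  have "evd a (- p) + evd a p = 0" by (simp flip: evd_add)
  thus ?thesis by (simp add: eq_neg_iff_add_eq_0)
qed
lemma evd_diff: "evd a (p - q) = evd a p - evd a q"
  using evd_add[of a p "- q"] evd_minus[of a q] by simp

lemma vard_super: "finite S \<Longrightarrow> vars p \<subseteq> S \<Longrightarrow> vard p = (\<Sum>m\<in>S. (- 1) ^ m * (Ds ^^ m) (pdiff m p))"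
  unfolding vard_def by (rule sum.mono_neutral_left) (auto simp: pdiff_notvar)



definition der :: "(dpoly \<Rightarrow> dpoly) \<Rightarrow> bool" where
  "der \<delta> \<longleftrightarrow> (\<forall>p q. \<delta> (p + q) = \<delta> p + \<delta> q) \<and> (\<forall>p q. \<delta> (p * q) = \<delta> p * q + p * \<delta> q)"

lemma single_update: "a \<notin> Poly_Mapping.keys f \<Longrightarrow> Poly_Mapping.update a b f = f + Poly_Mapping.single a b"
  for f :: "nat \<Rightarrow>\<^sub>0 nat"
  by (intro poly_mapping_eqI) (auto simp: lookup_update lookup_add lookup_single when_def in_keys_iff)

lemma single_single_pow: "Poly_Mapping.single (Poly_Mapping.single a b) (1::real) = kv a ^ b"
proof (induction b)
  case 0 thus ?case by simp
next
  case (Suc b)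
  have "Poly_Mapping.single a (Suc b) = Poly_Mapping.single a b + Poly_Mapping.single a 1"
    by (simp flip: single_add)
  hence "Poly_Mapping.single (Poly_Mapping.single a (Suc b)) (1::real) =
         Poly_Mapping.single (Poly_Mapping.single a b) 1 * kv a"
    by (simp add: kv_def mult_single)
  with Suc show ?case by (simp add: mult_ac)
qed

lemma der_unique:
  assumes d: "der \<delta>" and k: "\<And>n. \<delta> (kv n) = 0" and c: "\<And>c. \<delta> (dconst c) = 0"
  shows "\<delta> p = 0"
proof -
  have add: "\<delta> (p + q) = \<delta> p + \<delta> q" for p q using d by (simp add: der_def)
  have mul: "\<delta> (p * q) = \<delta> p * q + p * \<delta> q" for p q using d by (simp add: der_def)
  have z: "\<delta> 0 = 0" using add[of 0 0] by simp
  have sm: "\<delta> (sum f A) = (\<Sum>x\<in>A. \<delta> (f x))" for f :: "'a \<Rightarrow> dpoly" and A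
    by (induction A rule: infinite_finite_induct) (auto simp: z add)
  have pw: "\<delta> x = 0 \<Longrightarrow> \<delta> (x ^ n) = 0" for x n
  proof -
    have c1: "\<delta> 1 = 0" using c[of 1] by (simp add: dconst_def)
    show "\<delta> x = 0 \<Longrightarrow> \<delta> (x ^ n) = 0" by (induction n) (auto simp: mul c1)
  qed
  have s1: "\<delta> (Poly_Mapping.single \<mu> 1) = 0" for \<mu>
  proof (induction \<mu> rule: update_induct)
    case const thus ?case using c[of 1] by (simp add: dconst_def)
  next
    case (update f a b)
    hence "Poly_Mapping.single (Poly_Mapping.update a b f) (1::real) = Poly_Mapping.single f 1 * kv a ^ b"
      by (simp add: single_update mult_single flip: single_single_pow)
    with update show ?case by (simp add: mul pw k)
  qed
  have s: "\<delta> (Poly_Mapping.single \<mu> a) = 0" for \<mu> a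
  proof -
    have "Poly_Mapping.single \<mu> a = dconst a * Poly_Mapping.single \<mu> 1"
      by (simp add: dconst_def mult_single)
    thus ?thesis by (simp add: mul c s1)
  qed
  show ?thesis by (subst poly_expand) (simp add: sm s)
qed

lemma evd_Ds: "evd a (Ds h) = Ds (evd a h)"
proof -
  let ?d = "\<lambda>h. evd a (Ds h) - Ds (evd a h)"
  have "der ?d"
    unfolding der_def by (simp add: Ds_add evd_add Ds_mult evd_mult algebra_simps)
  moreover have "?d (kv n) = 0" for n by simp
  moreover have "?d (dconst c) = 0" for c by simp
  ultimately have "?d h = 0" by (rule der_unique)
  thus ?thesis by simp
qed

lemma Ds_evd: "Ds (evd a h) = evd a (Ds h)"
  by (simp add: evd_Ds)

lemma evd_kv0[simp]: "evd a (kv 0) = a" by simp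
lemma Ds_kv0[simp]: "Ds (kv 0) = kv 1" by simp

lemma ieq_refl[simp]: "ieq x x"
  unfolding ieq_def by (rule exI[of _ 0]) simp

lemma ieq_sym: "ieq x y \<Longrightarrow> ieq y x"
proof -
  assume "ieq x y" then obtain h where "x - y = Ds h" by (auto simp: ieq_def)
  have "y - x = - (x - y)" by simp
  hence "y - x = Ds (- h)" using \<open>x - y = Ds h\<close> by (simp only: Ds_minus)
  thus ?thesis by (auto simp: ieq_def)
qed

lemma ieq_trans: "ieq x y \<Longrightarrow> ieq y z \<Longrightarrow> ieq x z"
proof -
  assume "ieq x y" "ieq y z" then obtain h g where "x - y = Ds h" "y - z = Ds g" by (auto simp: ieq_def)
  have "x - z = (x - y) + (y - z)" by simp
  hence "x - z = Ds (h + g)" using \<open>x - y = Ds h\<close> \<open>y - z = Ds g\<close> by (simp only: Ds_add)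
  thus ?thesis by (auto simp: ieq_def)
qed

lemma ieq_add: "ieq x y \<Longrightarrow> ieq u v \<Longrightarrow> ieq (x + u) (y + v)"
  unfolding ieq_def
proof (elim exE)
  fix h g assume "x - y = Ds h" "u - v = Ds g"
  hence "x + u - (y + v) = Ds (h + g)" by (simp add: Ds_add algebra_simps)
  thus "\<exists>h. x + u - (y + v) = Ds h" ..
qed

lemma ieq_Ds: "ieq (x + Ds h) x"
  unfolding ieq_def by auto

lemma ieq_iff: "ieq x y \<longleftrightarrow> (\<exists>h. x = y + Ds h)"
  unfolding ieq_def by (auto simp: algebra_simps)

lemma ieq_sum: "(\<And>i. i \<in> A \<Longrightarrow> ieq (f i) (g i)) \<Longrightarrow> ieq (sum f A) (sum g A)"
  by (induction A rule: infinite_finite_induct) (auto intro: ieq_add)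

lemma Ds_neg_one_pow[simp]: "Ds ((- 1) ^ n) = 0"
  by (induction n) (auto simp: Ds_mult Ds_minus)

lemma ibp: "ieq ((- 1) ^ m * (f * (Ds ^^ m) g)) ((Ds ^^ m) f * g)"
proof (induction m arbitrary: f)
  case 0 thus ?case by simp
next
  case (Suc m)
  define G where "G = (Ds ^^ m) g"
  define s where "s = ((- 1) ^ m :: dpoly)"
  have sD: "Ds s = 0" by (simp add: s_def)
  have e1: "(Ds ^^ Suc m) g = Ds G" by (simp add: G_def)
  have e2: "(Ds ^^ Suc m) f = (Ds ^^ m) (Ds f)" by (simp only: funpow_Suc_right comp_def)
  have "(- 1) ^ Suc m * (f * Ds G) = s * (Ds f * G) + Ds (- (s * (f * G)))"
    by (simp add: s_def Ds_mult Ds_minus sD algebra_simps)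
  hence A: "ieq ((- 1) ^ Suc m * (f * (Ds ^^ Suc m) g)) (s * (Ds f * G))"
    unfolding e1 using ieq_Ds by simp
  have B: "ieq (s * (Ds f * G)) ((Ds ^^ Suc m) f * g)"
    using Suc[of "Ds f"] unfolding e2 s_def G_def .
  show ?case using ieq_trans[OF A B] .
qed

lemma vard_ibp: "ieq (a * vard L) (evd a L)"
proof -
  have "a * vard L = (\<Sum>m\<in>vars L. (- 1) ^ m * (a * (Ds ^^ m) (pdiff m L)))"
    by (simp add: vard_def sum_distrib_left mult_ac)
  also have "ieq \<dots> (\<Sum>m\<in>vars L. (Ds ^^ m) a * pdiff m L)"
    by (rule ieq_sum) (rule ibp)
  finally show ?thesis by (simp add: evd_def)
qed


lemma vk_XA: "rhoV V = 0 \<Longrightarrow> vk V m = (Ds ^^ m) (vk V 0)"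
  by (induction m) auto

lemma vact_XA: "rhoV V = 0 \<Longrightarrow> vact V = evd (vk V 0)"
  by (auto simp: fun_eq_iff vact_def evd_def vk_XA)

lemma vk0_XA: "rhoV V = 0 \<Longrightarrow> vk V 0 = Ds (phiV V)"
  by simp

lemma rho_XA: "rhoV (f, g) = 0 \<longleftrightarrow> Ds f = kv 0 * g"
  by (simp add: rhoV_def)

lemma bracket_XA:
  assumes h1: "Ds f1 = kv 0 * g1" and h2: "Ds f2 = kv 0 * g2"
  shows "rhoV (vbracket (f1, g1) (f2, g2)) = 0"
    and "phiV (vbracket (f1, g1) (f2, g2)) =
         evd (Ds (phiV (f1, g1))) (phiV (f2, g2)) - evd (Ds (phiV (f2, g2))) (phiV (f1, g1))"
proof -
  have r1: "rhoV (f1, g1) = 0" and r2: "rhoV (f2, g2) = 0" using h1 h2 by (simp_all add: rho_XA)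
  note va = vact_XA[OF r1] vact_XA[OF r2] vk0_XA[OF r1] vk0_XA[OF r2]
  show "rhoV (vbracket (f1, g1) (f2, g2)) = 0"
    unfolding vbracket_def covD_def va rhoV_def phiV_def
    by (simp add: Ds_add Ds_diff Ds_mult Ds_evd evd_add evd_diff evd_mult h1 h2 algebra_simps)
  show "phiV (vbracket (f1, g1) (f2, g2)) =
         evd (Ds (phiV (f1, g1))) (phiV (f2, g2)) - evd (Ds (phiV (f2, g2))) (phiV (f1, g1))"
    unfolding vbracket_def covD_def va phiV_def
    by (simp add: Ds_add Ds_diff Ds_mult Ds_evd evd_add evd_diff evd_mult h1 h2 algebra_simps)
qed


lemma Ds_dconst_mult: "Ds (dconst c * x) = dconst c * Ds x"
  by (simp add: Ds_mult)

lemma pibar_rho: "Ds a = kv 0 * Ds p \<Longrightarrow> rhoV (pibar p a) = 0"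
  by (simp add: pibar_def rhoV_def)

lemma pibar_vk0: "Ds a = kv 0 * Ds p \<Longrightarrow> vk (pibar p a) 0 = Ds (Ds (Ds p) + kv 0 * a)"
  using vk0_XA[OF pibar_rho] by (simp add: pibar_def phiV_def)

lemma pibar_phi: "phiV (pibar p a) = Ds (Ds p) + kv 0 * a"
  by (simp add: pibar_def phiV_def)

lemma skew:
  assumes hp: "Ds p1 = kv 0 * Ds p" and hq: "Ds q1 = kv 0 * Ds q"
  shows "ieq (alpha q (pibar p p1)) (- alpha p (pibar q q1))"
proof -
  define Bp where "Bp = Ds (Ds p) + kv 0 * p1"
  define Bq where "Bq = Ds (Ds q) + kv 0 * q1"
  have "alpha q (pibar p p1) - (- alpha p (pibar q q1)) = Ds (q * Bp + p * Bq - Ds p * Ds q - p1 * q1)"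
    unfolding alpha_def pibar_vk0[OF hp] pibar_vk0[OF hq] Bp_def Bq_def
    by (simp add: Ds_add Ds_diff Ds_mult hp hq algebra_simps)
  thus ?thesis unfolding ieq_def ..
qed

lemma key_term:
  assumes hl: "Ds al = kv 0 * Ds pl" and hw: "Ds w = Aj * Ds pii + kv 0 * Ds u"
  shows "Ds (Ds (Ds u) + Aj * ai + kv 0 * w) * pl =
     - u * Ds (Ds (Ds pl) + kv 0 * al) + Aj * (al * Ds pii - ai * Ds pl)
     + Ds (pl * (Ds (Ds u) + Aj * ai + kv 0 * w) - Ds pl * Ds u + Ds (Ds pl) * u - al * w + al * kv 0 * u)"
  by (simp add: Ds_add Ds_diff Ds_mult Ds_minus hl hw algebra_simps)

lemma term_lemma:
  assumes hi: "Ds ai = kv 0 * Ds pii" and hj: "Ds aj = kv 0 * Ds pj" and hl: "Ds al = kv 0 * Ds pl"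
  defines "Ai \<equiv> Ds (Ds (Ds pii) + kv 0 * ai)" and "Aj \<equiv> Ds (Ds (Ds pj) + kv 0 * aj)"
      and "Al \<equiv> Ds (Ds (Ds pl) + kv 0 * al)"
  shows "ieq (vfun (pibar pii ai) (omega (pibar pj aj) pl) - omega (vbracket (pibar pii ai) (pibar pj aj)) pl)
             (Aj * evd Ai pl - evd Aj pii * Al + Aj * (al * Ds pii - ai * Ds pl))"
proof -
  have vi: "vk (pibar pii ai) 0 = Ai" using pibar_vk0[OF hi] by (simp add: Ai_def)
  have vj: "vk (pibar pj aj) 0 = Aj" using pibar_vk0[OF hj] by (simp add: Aj_def)
  have br: "rhoV (vbracket (pibar pii ai) (pibar pj aj)) = 0"
       "phiV (vbracket (pibar pii ai) (pibar pj aj)) =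
        evd (Ds (phiV (pibar pii ai))) (phiV (pibar pj aj)) - evd (Ds (phiV (pibar pj aj))) (phiV (pibar pii ai))"
    using bracket_XA[OF hi hj] by (simp_all add: pibar_def)
  have vb: "vk (vbracket (pibar pii ai) (pibar pj aj)) 0 = evd Ai Aj - evd Aj Ai"
    unfolding vk0_XA[OF br(1)] br(2) pibar_phi Ai_def Aj_def
    by (simp add: Ds_diff Ds_evd)
  have "vfun (pibar pii ai) (omega (pibar pj aj) pl) = Ai * vard (Aj * pl)"
    by (simp only: vfun_def omega_def alpha_def vi vj)
  hence e1: "ieq (vfun (pibar pii ai) (omega (pibar pj aj) pl)) (evd Ai Aj * pl + Aj * evd Ai pl)"
    using vard_ibp[of Ai "Aj * pl"] by (simp add: evd_mult)
  have e2: "omega (vbracket (pibar pii ai) (pibar pj aj)) pl = (evd Ai Aj - evd Aj Ai) * pl"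
    by (simp only: omega_def alpha_def vb)
  define u where "u = evd Aj pii"
  define w where "w = evd Aj ai"
  have hw: "Ds w = Aj * Ds pii + kv 0 * Ds u"
    by (simp add: w_def u_def Ds_evd hi evd_mult)
  have eA: "evd Aj Ai = Ds (Ds (Ds u) + Aj * ai + kv 0 * w)"
    by (simp add: Ai_def u_def w_def evd_Ds evd_add evd_mult add.assoc)
  have A: "ieq (vfun (pibar pii ai) (omega (pibar pj aj) pl) - omega (vbracket (pibar pii ai) (pibar pj aj)) pl)
        (Aj * evd Ai pl + evd Aj Ai * pl)"
    using ieq_add[OF e1 ieq_refl[of "- omega (vbracket (pibar pii ai) (pibar pj aj)) pl"]]
    unfolding e2 by (simp add: algebra_simps)
  define H where "H = pl * (Ds (Ds u) + Aj * ai + kv 0 * w) - Ds pl * Ds u + Ds (Ds pl) * u - al * w + al * kv 0 * u"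
  have kt: "evd Aj Ai * pl = - u * Al + Aj * (al * Ds pii - ai * Ds pl) + Ds H"
    unfolding eA key_term[OF hl hw] H_def Al_def ..
  have eqB: "Aj * evd Ai pl + evd Aj Ai * pl =
     (Aj * evd Ai pl - evd Aj pii * Al + Aj * (al * Ds pii - ai * Ds pl)) + Ds H"
    unfolding kt u_def by (simp add: algebra_simps)
  have B: "ieq (Aj * evd Ai pl + evd Aj Ai * pl) (Aj * evd Ai pl - evd Aj pii * Al + Aj * (al * Ds pii - ai * Ds pl))"
    unfolding eqB by (rule ieq_Ds)
  show ?thesis using ieq_trans[OF A B] .
qed

lemma sum_lemma:
  assumes h1: "Ds a1 = kv 0 * Ds p1" and h2: "Ds a2 = kv 0 * Ds p2" and h3: "Ds a3 = kv 0 * Ds p3"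
  defines "B1 \<equiv> Ds (Ds p1) + kv 0 * a1" and "B2 \<equiv> Ds (Ds p2) + kv 0 * a2" and "B3 \<equiv> Ds (Ds p3) + kv 0 * a3"
  shows "(Ds B2 * evd (Ds B1) p3 - evd (Ds B2) p1 * Ds B3 + Ds B2 * (a3 * Ds p1 - a1 * Ds p3))
       + (Ds B3 * evd (Ds B2) p1 - evd (Ds B3) p2 * Ds B1 + Ds B3 * (a1 * Ds p2 - a2 * Ds p1))
       + (Ds B1 * evd (Ds B3) p2 - evd (Ds B1) p3 * Ds B2 + Ds B1 * (a2 * Ds p3 - a3 * Ds p2))
       = Ds (B2 * (a3 * Ds p1 - a1 * Ds p3) + B3 * (a1 * Ds p2 - a2 * Ds p1) + B1 * (a2 * Ds p3 - a3 * Ds p2))"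
proof -
  have "Ds (B2 * (a3 * Ds p1 - a1 * Ds p3) + B3 * (a1 * Ds p2 - a2 * Ds p1) + B1 * (a2 * Ds p3 - a3 * Ds p2))
     = Ds B2 * (a3 * Ds p1 - a1 * Ds p3) + Ds B3 * (a1 * Ds p2 - a2 * Ds p1) + Ds B1 * (a2 * Ds p3 - a3 * Ds p2)"
    unfolding B1_def B2_def B3_def
    by (simp only: Ds_add Ds_diff Ds_mult h1 h2 h3) (simp add: algebra_simps)
  thus ?thesis by (simp add: algebra_simps)
qed


lemma bracket_pibar:
  assumes hp: "Ds a = kv 0 * Ds p" and hq: "Ds b = kv 0 * Ds q"
  shows "vbracket (pibar p a) (pibar q b) \<in> pibar_image"
proof -
  define A where "A = Ds (phiV (pibar p a))"
  define B where "B = Ds (phiV (pibar q b))"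
  define r where "r = evd A q - evd B p + b * Ds p - a * Ds q"
  define r1 where "r1 = fst (vbracket (pibar p a) (pibar q b))"
  have br: "rhoV (vbracket (pibar p a) (pibar q b)) = 0"
    using bracket_XA(1)[OF hp hq] by (simp add: pibar_def)
  have va: "vact (pibar p a) = evd A" "vact (pibar q b) = evd B"
    using vact_XA[OF pibar_rho[OF hp]] vact_XA[OF pibar_rho[OF hq]] vk0_XA[OF pibar_rho[OF hp]] vk0_XA[OF pibar_rho[OF hq]]
    by (simp_all add: A_def B_def pibar_rho[OF hp] pibar_rho[OF hq])
  have s: "snd (vbracket (pibar p a) (pibar q b)) = Ds r"
    unfolding vbracket_def covD_def va r_def pibar_phi
    by (simp add: pibar_def Ds_add Ds_diff Ds_mult Ds_evd hp hq algebra_simps)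
  have e: "vbracket (pibar p a) (pibar q b) = pibar r r1"
    unfolding r1_def using s prod.collapse[of "vbracket (pibar p a) (pibar q b)"] by (simp add: pibar_def)
  have d: "Ds r1 = kv 0 * Ds r"
    using br unfolding rhoV_def r1_def s by simp
  show ?thesis unfolding e pibar_image_def Omega1_def using d by blast
qed

theorem theorem5p3:
  shows
    "(\<forall>p q p1 q1. p \<in> Omega1 \<and> q \<in> Omega1 \<and> Ds p1 = kv 0 * Ds p \<and> Ds q1 = kv 0 * Ds q \<longrightarrow>
        ieq (alpha q (pibar p p1)) (- alpha p (pibar q q1)))
     \<and> pibar_image \<subseteq> XA
     \<and> (\<forall>V\<in>pibar_image. \<forall>W\<in>pibar_image.
          vadd V W \<in> pibar_image \<and> (\<forall>c. vscale c V \<in> pibar_image) \<and> vbracket V W \<in> pibar_image)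
     \<and> (\<forall>p1 p2 p3 a1 a2 a3.
          p1 \<in> Omega1 \<and> p2 \<in> Omega1 \<and> p3 \<in> Omega1 \<and>
          Ds a1 = kv 0 * Ds p1 \<and> Ds a2 = kv 0 * Ds p2 \<and> Ds a3 = kv 0 * Ds p3 \<longrightarrow>
          (let x1 = pibar p1 a1; x2 = pibar p2 a2; x3 = pibar p3 a3 in
           ieq ((vfun x1 (omega x2 p3) - omega (vbracket x1 x2) p3)
              + (vfun x2 (omega x3 p1) - omega (vbracket x2 x3) p1)
              + (vfun x3 (omega x1 p2) - omega (vbracket x3 x1) p2)) 0))"
proof (intro conjI)
  show "\<forall>p q p1 q1. p \<in> Omega1 \<and> q \<in> Omega1 \<and> Ds p1 = kv 0 * Ds p \<and> Ds q1 = kv 0 * Ds q \<longrightarrow>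
        ieq (alpha q (pibar p p1)) (- alpha p (pibar q q1))"
    using skew by blast
  show "pibar_image \<subseteq> XA"
    by (auto simp: pibar_image_def XA_def pibar_def)
  show "\<forall>V\<in>pibar_image. \<forall>W\<in>pibar_image.
          vadd V W \<in> pibar_image \<and> (\<forall>c. vscale c V \<in> pibar_image) \<and> vbracket V W \<in> pibar_image"
  proof (intro ballI conjI allI)
    fix V W assume "V \<in> pibar_image" "W \<in> pibar_image"
    then obtain p a q b where V: "V = pibar p a" and hp: "Ds a = kv 0 * Ds p"
      and W: "W = pibar q b" and hq: "Ds b = kv 0 * Ds q"
      by (auto simp: pibar_image_def)
    have "vadd V W = pibar (p + q) (a + b)" by (simp add: V W vadd_def pibar_def Ds_add)
    moreover have "Ds (a + b) = kv 0 * Ds (p + q)" by (simp add: Ds_add hp hq algebra_simps)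
    ultimately show "vadd V W \<in> pibar_image" unfolding pibar_image_def Omega1_def by blast
    fix c
    have "vscale c V = pibar (dconst c * p) (dconst c * a)" by (simp add: V vscale_def pibar_def Ds_dconst_mult)
    moreover have "Ds (dconst c * a) = kv 0 * Ds (dconst c * p)" by (simp only: Ds_dconst_mult hp) (simp add: algebra_simps)
    ultimately show "vscale c V \<in> pibar_image" unfolding pibar_image_def Omega1_def by blast
  next
    fix V W assume "V \<in> pibar_image" "W \<in> pibar_image"
    then obtain p a q b where V: "V = pibar p a" and hp: "Ds a = kv 0 * Ds p"
      and W: "W = pibar q b" and hq: "Ds b = kv 0 * Ds q"
      by (auto simp: pibar_image_def)
    show "vbracket V W \<in> pibar_image" unfolding V W by (rule bracket_pibar[OF hp hq])
  qed
  show "\<forall>p1 p2 p3 a1 a2 a3.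
          p1 \<in> Omega1 \<and> p2 \<in> Omega1 \<and> p3 \<in> Omega1 \<and>
          Ds a1 = kv 0 * Ds p1 \<and> Ds a2 = kv 0 * Ds p2 \<and> Ds a3 = kv 0 * Ds p3 \<longrightarrow>
          (let x1 = pibar p1 a1; x2 = pibar p2 a2; x3 = pibar p3 a3 in
           ieq ((vfun x1 (omega x2 p3) - omega (vbracket x1 x2) p3)
              + (vfun x2 (omega x3 p1) - omega (vbracket x2 x3) p1)
              + (vfun x3 (omega x1 p2) - omega (vbracket x3 x1) p2)) 0)"
  proof (intro allI impI, elim conjE)
    fix p1 p2 p3 a1 a2 a3
    assume h1: "Ds a1 = kv 0 * Ds p1" and h2: "Ds a2 = kv 0 * Ds p2" and h3: "Ds a3 = kv 0 * Ds p3"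
    note t1 = term_lemma[OF h1 h2 h3] and t2 = term_lemma[OF h2 h3 h1] and t3 = term_lemma[OF h3 h1 h2]
    note S = sum_lemma[OF h1 h2 h3]
    show "let x1 = pibar p1 a1; x2 = pibar p2 a2; x3 = pibar p3 a3 in
           ieq ((vfun x1 (omega x2 p3) - omega (vbracket x1 x2) p3)
              + (vfun x2 (omega x3 p1) - omega (vbracket x2 x3) p1)
              + (vfun x3 (omega x1 p2) - omega (vbracket x3 x1) p2)) 0"
      unfolding Let_def
      using ieq_trans[OF ieq_add[OF ieq_add[OF t1 t2] t3], of 0] S
      unfolding ieq_def by auto
  qed
qed

end
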